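(* Let $n$ be a positive integer and let $p>n+1$ be a prime. Define the polynomial $$F_n(x)=\sum_{0<i_1<\cdots<i_n<p}\frac{x^{i_1}}{i_1\cdots i_n}\in\mathbb{Z}_p[x],$$ where the sum ranges over integers $i_1,\dots,i_n$. Then $$F_n(1-x)\equiv(-1)^{n-1}F_n(x)\pmod p,$$ i.e., every coefficient of the polynomial $F_n(1-x)-(-1)^{n-1}F_n(x)$ is divisible by $p$ in $\mathbb{Z}_p$.
   Context: $\mathbb{Z}_p$ denotes the ring of $p$-adic integers (the integral ring of the $p$-adic field $\mathbb{Q}_p$); the coefficients $1/(i_1\cdots i_n)$ lie in $\mathbb{Z}_p$ since each $i_j<p$. *)

theory Defs
  imports "HOL-Computational_Algebra.Polynomial" "HOL-Computational_Algebra.Primes"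
begin

text \<open>F_n(x) = sum over 0 < i_1 < ... < i_n < p of x^(i_1) / (i_1 ... i_n),
  as a polynomial with rational coefficients (all of which lie in Z_(p) = Q \<inter> Z_p).
  A strictly increasing tuple (i_1,...,i_n) is the same as an n-element subset S
  of {1..p-1}; then i_1 = Min S and i_1...i_n = prod S.\<close>
definition F :: "nat \<Rightarrow> nat \<Rightarrow> rat poly" where
  "F n p = (\<Sum>S\<in>{S. S \<subseteq> {1..<p} \<and> card S = n}.
              monom (1 / of_nat (\<Prod>S)) (Min S))"

text \<open>A rational q is divisible by p in Z_p iff q = p * a / b with a, b integers
  and p not dividing b.\<close>
definition p_divisible :: "nat \<Rightarrow> rat \<Rightarrow> bool" where
  "p_divisible p q \<longleftrightarrow>
     (\<exists>a b :: int. b \<noteq> 0 \<and> \<not> (int p dvd b) \<and> q = of_int (int p * a) / of_int b)"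

end

theory Submission imports Defs begin

definition Zp :: "nat \<Rightarrow> rat set" where
  "Zp p = {q. \<exists>a b::int. b \<noteq> 0 \<and> \<not> int p dvd b \<and> q = of_int a / of_int b}"

lemma Zp_intro: "b \<noteq> 0 \<Longrightarrow> \<not> int p dvd b \<Longrightarrow> q = of_int a / of_int b \<Longrightarrow> q \<in> Zp p"
  unfolding Zp_def by blast

lemma Zp_of_int: "prime p \<Longrightarrow> of_int a \<in> Zp p"
  by (rule Zp_intro[of 1 _ _ a]) (auto simp: prime_gt_1_nat)

lemma Zp_0: "prime p \<Longrightarrow> 0 \<in> Zp p" using Zp_of_int[of p 0] by simp
lemma Zp_1: "prime p \<Longrightarrow> 1 \<in> Zp p" using Zp_of_int[of p 1] by simp

lemma Zp_add:
  assumes p: "prime p" and "x \<in> Zp p" "y \<in> Zp p" shows "x + y \<in> Zp p"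
proof -
  obtain a b where ab: "b \<noteq> 0" "\<not> int p dvd b" "x = of_int a / of_int b" using assms unfolding Zp_def by blast
  obtain c d where cd: "d \<noteq> 0" "\<not> int p dvd d" "y = of_int c / of_int d" using assms unfolding Zp_def by blast
  have pr: "prime (int p)" using p by simp
  show ?thesis
  proof (rule Zp_intro[of "b*d" _ _ "a*d + c*b"])
    show "\<not> int p dvd b * d" using ab cd pr by (simp add: prime_dvd_mult_iff)
    show "x + y = of_int (a * d + c * b) / of_int (b * d)" using ab cd by (simp add: field_simps)
  qed (use ab cd in auto)
qed

lemma Zp_mult:
  assumes p: "prime p" and "x \<in> Zp p" "y \<in> Zp p" shows "x * y \<in> Zp p"
proof -
  obtain a b where ab: "b \<noteq> 0" "\<not> int p dvd b" "x = of_int a / of_int b" using assms unfolding Zp_def by blast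
  obtain c d where cd: "d \<noteq> 0" "\<not> int p dvd d" "y = of_int c / of_int d" using assms unfolding Zp_def by blast
  have pr: "prime (int p)" using p by simp
  show ?thesis
  proof (rule Zp_intro[of "b*d" _ _ "a*c"])
    show "\<not> int p dvd b * d" using ab cd pr by (simp add: prime_dvd_mult_iff)
    show "x * y = of_int (a * c) / of_int (b * d)" using ab cd by (simp add: field_simps)
  qed (use ab cd in auto)
qed

lemma Zp_uminus: "prime p \<Longrightarrow> x \<in> Zp p \<Longrightarrow> - x \<in> Zp p"
  using Zp_mult[of p "-1" x] Zp_of_int[of p "-1"] by simp

lemma Zp_diff: "prime p \<Longrightarrow> x \<in> Zp p \<Longrightarrow> y \<in> Zp p \<Longrightarrow> x - y \<in> Zp p"
  using Zp_add[of p x "-y"] Zp_uminus[of p y] by simp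

lemma Zp_inv_nat: "\<not> p dvd i \<Longrightarrow> 1 / of_nat i \<in> Zp p"
proof -
  assume a: "\<not> p dvd i"
  hence "i \<noteq> 0" by (metis dvd_0_right)
  thus ?thesis by (intro Zp_intro[of "int i" _ _ 1]) (use a in auto)
qed

lemma Zp_sum: "prime p \<Longrightarrow> (\<And>x. x \<in> A \<Longrightarrow> f x \<in> Zp p) \<Longrightarrow> sum f A \<in> Zp p"
  by (induction A rule: infinite_finite_induct) (auto intro: Zp_add Zp_0)

lemma Zp_prod: "prime p \<Longrightarrow> (\<And>x. x \<in> A \<Longrightarrow> f x \<in> Zp p) \<Longrightarrow> prod f A \<in> Zp p"
  by (induction A rule: infinite_finite_induct) (auto intro: Zp_mult Zp_1)

lemma Zp_power: "prime p \<Longrightarrow> x \<in> Zp p \<Longrightarrow> x ^ n \<in> Zp p"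
  by (induction n) (auto intro: Zp_mult Zp_1)

lemma Zp_m1pow: "prime p \<Longrightarrow> (-1) ^ n \<in> Zp p"
  by (intro Zp_power Zp_uminus Zp_1)

lemma p_divisible_iff: "prime p \<Longrightarrow> p_divisible p q \<longleftrightarrow> q / of_nat p \<in> Zp p"
proof -
  assume p: "prime p"
  hence p0: "(of_nat p :: rat) \<noteq> 0" by (auto simp: prime_gt_0_nat)
  show ?thesis
  proof
    assume "p_divisible p q"
    then obtain a b where ab: "b \<noteq> 0" "\<not> int p dvd b" "q = of_int (int p * a) / of_int b" unfolding p_divisible_def by blast
    show "q / of_nat p \<in> Zp p" by (rule Zp_intro[of b _ _ a]) (use ab p0 in auto)
  next
    assume "q / of_nat p \<in> Zp p"
    then obtain a b where ab: "b \<noteq> 0" "\<not> int p dvd b" "q / of_nat p = of_int a / of_int b" unfolding Zp_def by blast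
    hence "q = of_int (int p * a) / of_int b" using p0 by (simp add: field_simps)
    thus "p_divisible p q" unfolding p_divisible_def using ab by blast
  qed
qed

lemma Zp_of_nat: "prime p \<Longrightarrow> of_nat k \<in> Zp p"
  using Zp_of_int[of p "int k"] by simp

definition PZ :: "nat \<Rightarrow> rat poly \<Rightarrow> bool" where "PZ p P \<longleftrightarrow> (\<forall>i. coeff P i \<in> Zp p)"
definition PD :: "nat \<Rightarrow> rat poly \<Rightarrow> bool" where "PD p P \<longleftrightarrow> (\<forall>i. p_divisible p (coeff P i))"

lemma PD_iff: "prime p \<Longrightarrow> PD p P \<longleftrightarrow> PZ p (smult (1 / of_nat p) P)"
  by (simp add: PD_def PZ_def p_divisible_iff)

lemma PZ_add: "prime p \<Longrightarrow> PZ p A \<Longrightarrow> PZ p B \<Longrightarrow> PZ p (A + B)"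
  by (auto simp: PZ_def intro: Zp_add)
lemma PZ_diff: "prime p \<Longrightarrow> PZ p A \<Longrightarrow> PZ p B \<Longrightarrow> PZ p (A - B)"
  by (auto simp: PZ_def intro: Zp_diff)
lemma PZ_uminus: "prime p \<Longrightarrow> PZ p A \<Longrightarrow> PZ p (- A)"
  by (auto simp: PZ_def intro: Zp_uminus)
lemma PZ_mult: "prime p \<Longrightarrow> PZ p A \<Longrightarrow> PZ p B \<Longrightarrow> PZ p (A * B)"
  unfolding PZ_def by (intro allI coeff_mult_semiring_closed[where R="Zp p"]) (auto intro: Zp_0 Zp_add Zp_mult)
lemma PZ_pcompose: "prime p \<Longrightarrow> PZ p A \<Longrightarrow> PZ p B \<Longrightarrow> PZ p (pcompose A B)"
  unfolding PZ_def by (intro allI coeff_pcompose_semiring_closed[where R="Zp p"]) (auto intro: Zp_0 Zp_add Zp_mult)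
lemma PZ_smult: "prime p \<Longrightarrow> c \<in> Zp p \<Longrightarrow> PZ p A \<Longrightarrow> PZ p (smult c A)"
  by (auto simp: PZ_def intro: Zp_mult)
lemma PZ_pderiv: "prime p \<Longrightarrow> PZ p A \<Longrightarrow> PZ p (pderiv A)"
  unfolding PZ_def coeff_pderiv by (auto intro!: Zp_mult Zp_of_nat simp del: of_nat_Suc)
lemma PZ_const: "prime p \<Longrightarrow> c \<in> Zp p \<Longrightarrow> PZ p [:c:]"
  by (auto simp: PZ_def coeff_pCons Zp_0 split: nat.splits)
lemma PZ_pCons: "prime p \<Longrightarrow> c \<in> Zp p \<Longrightarrow> PZ p A \<Longrightarrow> PZ p (pCons c A)"
  by (auto simp: PZ_def coeff_pCons split: nat.splits)
lemma PZ_0: "prime p \<Longrightarrow> PZ p 0"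
  by (auto simp: PZ_def Zp_0)
lemma PZ_power: "prime p \<Longrightarrow> PZ p A \<Longrightarrow> PZ p (A ^ k)"
  by (induction k) (auto intro: PZ_mult PZ_const Zp_1 simp: one_pCons)
lemma PZ_prod: "prime p \<Longrightarrow> (\<And>x. x \<in> S \<Longrightarrow> PZ p (f x)) \<Longrightarrow> PZ p (prod f S)"
  by (induction S rule: infinite_finite_induct) (auto intro: PZ_mult PZ_const Zp_1 simp: one_pCons)

lemma PD_add: "prime p \<Longrightarrow> PD p A \<Longrightarrow> PD p B \<Longrightarrow> PD p (A + B)"
  by (simp add: PD_iff smult_add_right PZ_add)
lemma PD_diff: "prime p \<Longrightarrow> PD p A \<Longrightarrow> PD p B \<Longrightarrow> PD p (A - B)"
  by (simp add: PD_iff smult_diff_right PZ_diff)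
lemma PD_uminus: "prime p \<Longrightarrow> PD p A \<Longrightarrow> PD p (- A)"
  by (simp add: PD_iff PZ_uminus)
lemma PD_mult_left: "prime p \<Longrightarrow> PD p A \<Longrightarrow> PZ p B \<Longrightarrow> PD p (A * B)"
  by (simp add: PD_iff PZ_mult flip: mult_smult_left)
lemma PD_mult_right: "prime p \<Longrightarrow> PZ p A \<Longrightarrow> PD p B \<Longrightarrow> PD p (A * B)"
  by (simp add: PD_iff PZ_mult flip: mult_smult_right)
lemma PD_pcompose: "prime p \<Longrightarrow> PD p A \<Longrightarrow> PZ p B \<Longrightarrow> PD p (pcompose A B)"
  by (simp add: PD_iff PZ_pcompose flip: pcompose_smult)
lemma PD_smult: "prime p \<Longrightarrow> p_divisible p c \<Longrightarrow> PZ p A \<Longrightarrow> PD p (smult c A)"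
  by (simp add: PD_def PZ_def p_divisible_iff) (metis Zp_mult times_divide_eq_left mult.commute)

lemma subsets_insert_sum:
  assumes "finite A" "a \<notin> A"
  shows "(\<Sum>B\<in>{B. B \<subseteq> insert a A \<and> card B = Suc k}. f B) =
         (\<Sum>B\<in>{B. B \<subseteq> A \<and> card B = Suc k}. f B) + (\<Sum>B\<in>{B. B \<subseteq> A \<and> card B = k}. f (insert a B))"
proof -
  have eq: "{B. B \<subseteq> insert a A \<and> card B = Suc k} =
     {B. B \<subseteq> A \<and> card B = Suc k} \<union> insert a ` {B. B \<subseteq> A \<and> card B = k}"
  proof (intro equalityI subsetI)
    fix B assume "B \<in> {B. B \<subseteq> insert a A \<and> card B = Suc k}"
    hence B: "B \<subseteq> insert a A" "card B = Suc k" by auto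
    have fB: "finite B" using B(1) assms(1) finite_subset by blast
    show "B \<in> {B. B \<subseteq> A \<and> card B = Suc k} \<union> insert a ` {B. B \<subseteq> A \<and> card B = k}"
    proof (cases "a \<in> B")
      case True
      hence "B = insert a (B - {a})" by auto
      moreover have "B - {a} \<subseteq> A" "card (B - {a}) = k" using B True fB by auto
      ultimately show ?thesis by blast
    next
      case False thus ?thesis using B by auto
    qed
  next
    fix B assume "B \<in> {B. B \<subseteq> A \<and> card B = Suc k} \<union> insert a ` {B. B \<subseteq> A \<and> card B = k}"
    thus "B \<in> {B. B \<subseteq> insert a A \<and> card B = Suc k}"
      using assms by (auto simp: card_insert_if finite_subset)
  qed
  have fin1: "finite {B. B \<subseteq> A \<and> card B = Suc k}" using assms(1) by (simp add: finite_subset)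
  have fin2: "finite {B. B \<subseteq> A \<and> card B = k}" using assms(1) by (simp add: finite_subset)
  have disj: "{B. B \<subseteq> A \<and> card B = Suc k} \<inter> insert a ` {B. B \<subseteq> A \<and> card B = k} = {}"
    using assms by auto
  have inj: "inj_on (insert a) {B. B \<subseteq> A \<and> card B = k}"
    using assms by (intro inj_onI) (metis insert_ident mem_Collect_eq subsetD)
  show ?thesis
    unfolding eq by (subst sum.union_disjoint) (use fin1 fin2 disj inj in \<open>auto simp: sum.reindex\<close>)
qed

lemma vieta:
  fixes c :: "nat \<Rightarrow> rat"
  assumes "finite A"
  shows "coeff (\<Prod>i\<in>A. [:1, c i:]) k = (\<Sum>B\<in>{B. B \<subseteq> A \<and> card B = k}. \<Prod>i\<in>B. c i)"
  using assms
proof (induction A arbitrary: k rule: finite_induct)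
  case empty
  show ?case
  proof (cases k)
    case 0
    have e: "{B::nat set. B = {} \<and> card B = 0} = {{}}" by auto
    thus ?thesis using 0 by (simp add: e)
  next
    case (Suc k')
    have "{B. B \<subseteq> {} \<and> card B = k} = {}" using Suc by auto
    thus ?thesis using Suc by simp
  qed
next
  case (insert a A)
  show ?case
  proof (cases k)
    case 0
    have "{B. B \<subseteq> insert a A \<and> card B = 0} = {{}}" using insert(1) by (auto simp: finite_subset)
    moreover have "{B. B \<subseteq> A \<and> card B = 0} = {{}}" using insert(1) by (auto simp: finite_subset)
    ultimately show ?thesis using insert 0 by simp
  next
    case (Suc k')
    have "coeff (\<Prod>i\<in>insert a A. [:1, c i:]) k = coeff ([:1, c a:] * (\<Prod>i\<in>A. [:1, c i:])) (Suc k')"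
      using insert Suc by simp
    also have "\<dots> = coeff (\<Prod>i\<in>A. [:1, c i:]) (Suc k') + c a * coeff (\<Prod>i\<in>A. [:1, c i:]) k'"
      by simp
    also have "\<dots> = (\<Sum>B\<in>{B. B \<subseteq> A \<and> card B = Suc k'}. \<Prod>i\<in>B. c i) +
                     (\<Sum>B\<in>{B. B \<subseteq> A \<and> card B = k'}. \<Prod>i\<in>insert a B. c i)"
    proof -
      have "(\<Sum>B\<in>{B. B \<subseteq> A \<and> card B = k'}. \<Prod>i\<in>insert a B. c i) =
            (\<Sum>B\<in>{B. B \<subseteq> A \<and> card B = k'}. c a * (\<Prod>i\<in>B. c i))"
      proof (intro sum.cong refl)
        fix B assume "B \<in> {B. B \<subseteq> A \<and> card B = k'}"
        hence "B \<subseteq> A" by auto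
        hence "finite B" "a \<notin> B" using insert(1,2) finite_subset by auto
        thus "(\<Prod>i\<in>insert a B. c i) = c a * (\<Prod>i\<in>B. c i)" by simp
      qed
      thus ?thesis using insert(3) by (simp add: sum_distrib_left)
    qed
    also have "\<dots> = (\<Sum>B\<in>{B. B \<subseteq> insert a A \<and> card B = k}. \<Prod>i\<in>B. c i)"
      using subsets_insert_sum[OF insert(1,2), where k=k' and f="\<lambda>B. \<Prod>i\<in>B. c i"] Suc by simp
    finally show ?thesis .
  qed
qed

definition ee :: "nat \<Rightarrow> nat \<Rightarrow> nat \<Rightarrow> rat" where
  "ee p k j = coeff (\<Prod>i\<in>{j..<p}. [:1, 1 / of_nat i:]) k"

lemma inv_prod_nat: "(\<Prod>i\<in>T. 1 / (of_nat i :: rat)) = 1 / of_nat (\<Prod>T)"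
  by (simp add: prod_dividef)

lemma ee_sum: "ee p k j = (\<Sum>T\<in>{T. T \<subseteq> {j..<p} \<and> card T = k}. 1 / of_nat (\<Prod>T))"
  unfolding ee_def by (subst vieta) (simp_all add: inv_prod_nat)

lemma ivl_insert: "j < p \<Longrightarrow> {j..<p} = insert j {Suc j..<p}" by auto

lemma ee_rec: "j < p \<Longrightarrow> ee p (Suc k) j = ee p (Suc k) (Suc j) + ee p k (Suc j) / of_nat j"
  unfolding ee_def by (subst ivl_insert) auto

lemma ee_0: "ee p 0 j = 1"
proof -
  have "{T. T \<subseteq> {j..<p} \<and> card T = 0} = {{}}" by (auto simp: finite_subset)
  thus ?thesis by (simp add: ee_sum)
qed

lemma ee_top: "p \<le> j \<Longrightarrow> ee p (Suc k) j = 0"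
  unfolding ee_def by simp

lemma inv_Zp: "prime p \<Longrightarrow> i < p \<Longrightarrow> 1 / of_nat i \<in> Zp p"
proof -
  assume "prime p" "i < p"
  show ?thesis
  proof (cases "i = 0")
    case True thus ?thesis using \<open>prime p\<close> by (simp add: Zp_0)
  next
    case False
    hence "\<not> p dvd i" using \<open>i < p\<close> by (auto dest: dvd_imp_le)
    thus ?thesis by (rule Zp_inv_nat)
  qed
qed

lemma ee_Zp: "prime p \<Longrightarrow> ee p k j \<in> Zp p"
proof -
  assume p: "prime p"
  have "PZ p (\<Prod>i\<in>{j..<p}. [:1, 1 / of_nat i:])"
    by (intro PZ_prod[OF p] PZ_pCons[OF p] PZ_const[OF p] Zp_1[OF p] inv_Zp[OF p]) auto
  thus ?thesis unfolding ee_def PZ_def by blast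
qed

lemma coeff_F:
  assumes n: "n > 0"
  shows "coeff (F n p) m = (if 0 < m \<and> m < p then ee p (n-1) (Suc m) / of_nat m else 0)"
proof -
  define Sn where "Sn = {S. S \<subseteq> {1..<p} \<and> card S = n}"
  have finSn: "finite Sn" unfolding Sn_def by (simp add: finite_subset)
  have "coeff (F n p) m = (\<Sum>S\<in>Sn. if Min S = m then 1 / of_nat (\<Prod>S) else 0)"
    unfolding F_def coeff_sum Sn_def by (simp only: coeff_monom)
  also have "\<dots> = (\<Sum>S\<in>{S\<in>Sn. Min S = m}. 1 / of_nat (\<Prod>S))"
    using finSn by (rule sum.inter_filter[symmetric])
  finally have c: "coeff (F n p) m = (\<Sum>S\<in>{S\<in>Sn. Min S = m}. 1 / of_nat (\<Prod>S))" .
  have Sprops: "finite S \<and> S \<noteq> {} \<and> Min S \<in> S \<and> (\<forall>y\<in>S. Min S \<le> y) \<and> S \<subseteq> {1..<p}" if "S \<in> Sn" for S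
  proof -
    have f: "finite S" using that unfolding Sn_def by (auto simp: finite_subset)
    have ne: "S \<noteq> {}" using that n unfolding Sn_def by auto
    show ?thesis using f ne that unfolding Sn_def by auto
  qed
  show ?thesis
  proof (cases "0 < m \<and> m < p")
    case False
    have e0: "{S\<in>Sn. Min S = m} = {}"
    proof (rule ccontr)
      assume "{S\<in>Sn. Min S = m} \<noteq> {}"
      then obtain S where "S \<in> Sn" "Min S = m" by auto
      thus False using Sprops[of S] False by auto
    qed
    have c0: "coeff (F n p) m = 0" unfolding c e0 by simp
    show ?thesis by (subst if_not_P[OF False]) (rule c0)
  next
    case True
    define Tn where "Tn = {T. T \<subseteq> {Suc m..<p} \<and> card T = n - 1}"
    have eqS: "{S\<in>Sn. Min S = m} = insert m ` Tn"
    proof (intro equalityI subsetI)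
      fix S assume S: "S \<in> {S\<in>Sn. Min S = m}"
      hence Sp: "finite S" "S \<noteq> {}" "m \<in> S" "\<forall>y\<in>S. m \<le> y" "S \<subseteq> {1..<p}" "card S = n"
        using Sprops[of S] unfolding Sn_def by auto
      have "S - {m} \<subseteq> {Suc m..<p}"
      proof
        fix y assume y: "y \<in> S - {m}"
        hence "m \<le> y" "y \<noteq> m" "y < p" using Sp by auto
        thus "y \<in> {Suc m..<p}" by simp
      qed
      moreover have "card (S - {m}) = n - 1" using Sp by simp
      ultimately have "S - {m} \<in> Tn" unfolding Tn_def by blast
      moreover have "S = insert m (S - {m})" using Sp by auto
      ultimately show "S \<in> insert m ` Tn" by blast
    next
      fix S assume "S \<in> insert m ` Tn"
      then obtain T where T: "T \<subseteq> {Suc m..<p}" "card T = n - 1" "S = insert m T" unfolding Tn_def by auto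
      have fT: "finite T" using T(1) by (simp add: finite_subset)
      have mT: "m \<notin> T" using T(1) by auto
      have "card S = n" using T fT mT n by simp
      moreover have "S \<subseteq> {1..<p}" using T True by auto
      moreover have "Min S = m" using T fT by (intro Min_eqI) auto
      ultimately show "S \<in> {S\<in>Sn. Min S = m}" unfolding Sn_def by auto
    qed
    have inj: "inj_on (insert m) Tn"
      unfolding Tn_def by (intro inj_onI) (metis Suc_n_not_le_n atLeastLessThan_iff insert_ident mem_Collect_eq subsetD)
    have "coeff (F n p) m = (\<Sum>T\<in>Tn. 1 / of_nat (\<Prod>(insert m T)))"
      unfolding c eqS using inj by (simp add: sum.reindex)
    also have "\<dots> = (\<Sum>T\<in>Tn. (1 / of_nat (\<Prod>T)) / of_nat m)"
    proof (intro sum.cong refl)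
      fix T assume "T \<in> Tn"
      hence "finite T" "m \<notin> T" unfolding Tn_def by (auto simp: finite_subset)
      thus "1 / of_nat (\<Prod>(insert m T)) = (1 / of_nat (\<Prod>T)) / (of_nat m :: rat)" by simp
    qed
    also have "\<dots> = ee p (n-1) (Suc m) / of_nat m"
      by (simp add: ee_sum Tn_def sum_divide_distrib)
    finally show ?thesis using True by simp
  qed
qed

lemma poly_F_1: "poly (F n p) 1 = ee p n 1"
  by (simp add: F_def poly_sum poly_monom ee_sum)

lemma poly_F_0: "n > 0 \<Longrightarrow> poly (F n p) 0 = 0"
proof -
  have "Min S \<noteq> 0" if "S \<subseteq> {1..<p}" "card S = n" "n > 0" for S
  proof -
    have "finite S" "S \<noteq> {}" using that by (auto simp: finite_subset)
    hence "Min S \<in> S" by simp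
    thus ?thesis using that by auto
  qed
  thus "n > 0 \<Longrightarrow> ?thesis" by (auto simp: F_def poly_sum poly_monom zero_power intro!: sum.neutral)
qed

lemma coeff_L0: "coeff ([:0,1,-1:] * Q) 0 = 0" by simp
lemma coeff_L1: "coeff ([:0,1,-1:] * (Q::rat poly)) (Suc 0) = coeff Q 0" by simp
lemma coeff_L2: "coeff ([:0,1,-1:] * (Q::rat poly)) (Suc (Suc k)) = coeff Q (Suc k) - coeff Q k" by simp

lemma rel_A:
  assumes p: "1 < p"
  shows "[:0,1,-1:] * pderiv (F (Suc (Suc n)) p) = [:0, ee p (Suc n) 1:] - F (Suc n) p"
proof (rule poly_eqI)
  fix k
  have cF: "coeff (F (Suc (Suc n)) p) m = (if 0 < m \<and> m < p then ee p (Suc n) (Suc m) / of_nat m else 0)" for m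
    using coeff_F[of "Suc (Suc n)" p m] by simp
  have cF1: "coeff (F (Suc n) p) m = (if 0 < m \<and> m < p then ee p n (Suc m) / of_nat m else 0)" for m
    using coeff_F[of "Suc n" p m] by simp
  have mulK: "of_nat K * coeff (F (Suc (Suc n)) p) K = (if K < p then ee p (Suc n) (Suc K) else 0)" if "K > 0" for K
    using that by (simp add: cF)
  show "coeff ([:0,1,-1:] * pderiv (F (Suc (Suc n)) p)) k = coeff ([:0, ee p (Suc n) 1:] - F (Suc n) p) k"
  proof (cases k)
    case 0 thus ?thesis by (simp add: cF1)
  next
    case (Suc k1)
    show ?thesis
    proof (cases k1)
      case 0
      have "ee p (Suc n) 1 = ee p (Suc n) 2 + ee p n 2" using ee_rec[of 1 p n] p by (simp add: numeral_2_eq_2)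
      thus ?thesis using Suc 0 p by (simp add: coeff_pderiv cF cF1 numeral_2_eq_2)
    next
      case (Suc k')
      define K where "K = Suc (Suc k')"
      have k: "k = K" using Suc \<open>k = Suc k1\<close> K_def by simp
      have lhs: "coeff ([:0,1,-1:] * pderiv (F (Suc (Suc n)) p)) k =
          of_nat K * coeff (F (Suc (Suc n)) p) K - of_nat (Suc k') * coeff (F (Suc (Suc n)) p) (Suc k')"
        unfolding k K_def coeff_L2 coeff_pderiv by simp
      also have "\<dots> = (if K < p then ee p (Suc n) (Suc K) else 0) - (if Suc k' < p then ee p (Suc n) K else 0)"
        by (subst mulK, simp add: K_def, subst mulK, simp_all add: K_def)
      finally have l: "coeff ([:0,1,-1:] * pderiv (F (Suc (Suc n)) p)) k =
          (if K < p then ee p (Suc n) (Suc K) else 0) - (if Suc k' < p then ee p (Suc n) K else 0)" .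
      have r: "coeff ([:0, ee p (Suc n) 1:] - F (Suc n) p) k = - (if K < p then ee p n (Suc K) / of_nat K else 0)"
        unfolding k K_def by (simp add: cF1)
      show ?thesis
      proof (cases "K < p")
        case True
        have "ee p (Suc n) K = ee p (Suc n) (Suc K) + ee p n (Suc K) / of_nat K" using ee_rec[OF True] .
        thus ?thesis using l r True by (simp add: K_def)
      next
        case False
        show ?thesis
        proof (cases "Suc k' < p")
          case True
          hence "K = p" using False K_def by simp
          thus ?thesis using l r False True ee_top[of p K n] by simp
        next
          case False
          thus ?thesis using l r \<open>\<not> K < p\<close> by simp
        qed
      qed
    qed
  qed
qed

lemma rel_A1:
  assumes p: "1 < p"
  shows "[:0,1,-1:] * pderiv (F (Suc 0) p) = monom 1 1 - monom 1 p"
proof (rule poly_eqI)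
  fix k
  have cF: "coeff (F (Suc 0) p) m = (if 0 < m \<and> m < p then 1 / of_nat m else 0)" for m
    using coeff_F[of "Suc 0" p m] by (simp add: ee_0)
  have mulK: "of_nat K * coeff (F (Suc 0) p) K = (if K < p then 1 else 0)" if "K > 0" for K
    using that by (simp add: cF)
  show "coeff ([:0,1,-1:] * pderiv (F (Suc 0) p)) k = coeff (monom 1 1 - monom 1 p) k"
  proof (cases k)
    case 0 thus ?thesis using p by (simp add: coeff_monom)
  next
    case (Suc k1)
    show ?thesis
    proof (cases k1)
      case 0
      thus ?thesis using Suc p by (simp add: coeff_pderiv cF coeff_monom)
    next
      case (Suc k')
      define K where "K = Suc (Suc k')"
      have k: "k = K" using Suc \<open>k = Suc k1\<close> K_def by simp
      have "coeff ([:0,1,-1:] * pderiv (F (Suc 0) p)) k =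
          of_nat K * coeff (F (Suc 0) p) K - of_nat (Suc k') * coeff (F (Suc 0) p) (Suc k')"
        unfolding k K_def coeff_L2 coeff_pderiv by simp
      also have "\<dots> = (if K < p then 1 else 0) - (if Suc k' < p then 1 else 0)"
        by (subst mulK, simp add: K_def, subst mulK, simp_all add: K_def)
      finally have l: "coeff ([:0,1,-1:] * pderiv (F (Suc 0) p)) k =
          (if K < p then 1 else 0) - (if Suc k' < p then 1 else 0)" .
      have r: "coeff (monom 1 1 - monom 1 p :: rat poly) k = - (if K = p then 1 else 0)"
        unfolding k K_def by (simp add: coeff_monom)
      show ?thesis
      proof (cases "K < p")
        case True thus ?thesis unfolding l r using K_def by simp
      next
        case False
        show ?thesis
        proof (cases "K = p")
          case True thus ?thesis unfolding l r using K_def by simp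
        next
          case False thus ?thesis unfolding l r using K_def \<open>\<not> K < p\<close> by simp
        qed
      qed
    qed
  qed
qed

lemma pdiv_add: "prime p \<Longrightarrow> p_divisible p x \<Longrightarrow> p_divisible p y \<Longrightarrow> p_divisible p (x + y)"
  by (simp add: p_divisible_iff add_divide_distrib Zp_add)
lemma pdiv_uminus: "prime p \<Longrightarrow> p_divisible p x \<Longrightarrow> p_divisible p (- x)"
  by (simp add: p_divisible_iff Zp_uminus)
lemma pdiv_diff: "prime p \<Longrightarrow> p_divisible p x \<Longrightarrow> p_divisible p y \<Longrightarrow> p_divisible p (x - y)"
  by (simp add: p_divisible_iff diff_divide_distrib Zp_diff)
lemma pdiv_mult: "prime p \<Longrightarrow> z \<in> Zp p \<Longrightarrow> p_divisible p x \<Longrightarrow> p_divisible p (z * x)"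
  by (simp add: p_divisible_iff) (metis Zp_mult times_divide_eq_right)
lemma pdiv_0: "prime p \<Longrightarrow> p_divisible p 0"
  by (simp add: p_divisible_iff Zp_0)
lemma pdiv_sum: "prime p \<Longrightarrow> (\<And>x. x \<in> A \<Longrightarrow> p_divisible p (f x)) \<Longrightarrow> p_divisible p (sum f A)"
  by (induction A rule: infinite_finite_induct) (auto intro: pdiv_add pdiv_0)
lemma pdiv_p_mult: "prime p \<Longrightarrow> z \<in> Zp p \<Longrightarrow> p_divisible p (of_nat p * z)"
proof -
  assume "prime p" "z \<in> Zp p"
  moreover have "(of_nat p :: rat) \<noteq> 0" using \<open>prime p\<close> by (auto simp: prime_gt_0_nat)
  ultimately show ?thesis by (simp add: p_divisible_iff)
qed
lemma pdiv_cancel: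
  assumes p: "prime p" and k: "0 < k" "k < p" and d: "p_divisible p (of_nat k * q)"
  shows "p_divisible p q"
proof -
  have "(of_nat k * q) / of_nat p \<in> Zp p" using d p by (simp add: p_divisible_iff)
  hence "(1 / of_nat k) * ((of_nat k * q) / of_nat p) \<in> Zp p"
    using inv_Zp[OF p k(2)] p by (intro Zp_mult) auto
  moreover have "(1 / of_nat k) * ((of_nat k * q) / of_nat p) = q / (of_nat p :: rat)" using k by simp
  ultimately show ?thesis using p by (simp add: p_divisible_iff)
qed

lemma pcompose_monom': "pcompose (monom c i) Q = smult c (Q ^ i)"
proof -
  have "pcompose ([:0,1:] ^ i) Q = Q ^ i" by (induction i) (simp_all add: pcompose_mult pcompose_pCons pcompose_1)
  thus ?thesis by (simp add: monom_altdef pcompose_smult)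
qed

lemma pcompose_expand:
  assumes "degree R \<le> n"
  shows "pcompose R Q = (\<Sum>i\<le>n. smult (coeff R i) (Q ^ i))"
proof -
  have "pcompose R Q = pcompose (\<Sum>i\<le>n. monom (coeff R i) i) Q" using poly_as_sum_of_monoms'[OF assms] by simp
  also have "\<dots> = (\<Sum>i\<le>n. smult (coeff R i) (Q ^ i))" by (simp add: pcompose_sum pcompose_monom')
  finally show ?thesis .
qed

lemma coeff_shift_power: "coeff ([:-1, 1:] ^ m) j = of_nat (m choose j) * (-1 :: rat) ^ (m - j)"
proof (cases "j \<le> m")
  case True thus ?thesis by (simp add: coeff_linear_poly_power)
next
  case False
  hence "coeff ([:-1, 1:] ^ m) j = (0::rat)" by (intro coeff_eq_0) (simp add: degree_linear_power)
  thus ?thesis using False by simp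
qed

lemma shift_id:
  assumes "1 \<le> m"
  shows "[:of_nat m - 1, 1:] * pcompose (\<Prod>i\<in>{1..<m}. [:1, 1 / of_nat i:]) [:-1,1:] = [:0,1:] * (\<Prod>i\<in>{1..<m}. [:1, 1 / (of_nat i :: rat):])"
  using assms
proof (induction m rule: dec_induct)
  case base thus ?case by (simp add: pcompose_1)
next
  case (step m)
  define Pm where "Pm = (\<Prod>i\<in>{1..<m}. [:1, 1 / (of_nat i :: rat):])"
  define Q where "Q = pcompose Pm [:-1,1:]"
  have IH: "[:of_nat m - 1, 1:] * Q = [:0,1:] * Pm" using step.IH unfolding Q_def Pm_def .
  have m0: "(of_nat m :: rat) \<noteq> 0" using step.hyps by simp
  have ins: "{1..<Suc m} = insert m {1..<m}" using step.hyps by auto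
  have P1: "(\<Prod>i\<in>{1..<Suc m}. [:1, 1 / (of_nat i :: rat):]) = [:1, 1 / of_nat m:] * Pm"
    unfolding ins Pm_def by simp
  have c1: "pcompose [:1, 1 / of_nat m:] [:-1,1:] = smult (1 / of_nat m) [:of_nat m - 1, 1 :: rat:]"
    using m0 by (simp add: pcompose_pCons field_simps)
  have c2: "[:of_nat (Suc m) - 1, 1:] = smult (of_nat m) [:1, 1 / of_nat m :: rat:]"
    using m0 by simp
  have "[:of_nat (Suc m) - 1, 1:] * pcompose (\<Prod>i\<in>{1..<Suc m}. [:1, 1 / of_nat i:]) [:-1,1:]
        = smult (of_nat m) [:1, 1 / of_nat m :: rat:] * (smult (1 / of_nat m) [:of_nat m - 1, 1 :: rat:] * Q)"
    unfolding P1 c2 pcompose_mult c1 Q_def by (simp add: mult_ac)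
  also have "\<dots> = [:1, 1 / of_nat m :: rat:] * ([:of_nat m - 1, 1 :: rat:] * Q)"
    using m0 by (simp only: mult_smult_left mult_smult_right smult_smult) simp
  also have "\<dots> = [:0,1:] * (\<Prod>i\<in>{1..<Suc m}. [:1, 1 / (of_nat i :: rat):])"
    unfolding IH P1 by (simp add: mult_ac)
  finally show ?case .
qed

lemma ee_pdiv:
  assumes p: "prime p" and k: "1 \<le> k" "k + 2 \<le> p"
  shows "p_divisible p (ee p k 1)"
proof -
  define P where "P = (\<Prod>i\<in>{1..<p}. [:1, 1 / (of_nat i :: rat):])"
  define R where "R = [:0,1:] * P"
  define Q where "Q = pcompose P [:-1,1:]"
  define r where "r = coeff R"
  have p1: "1 \<le> p" using p prime_ge_1_nat by blast
  have PZP: "PZ p P" unfolding P_def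
    by (intro PZ_prod[OF p] PZ_pCons[OF p] PZ_const[OF p] Zp_1[OF p] inv_Zp[OF p]) auto
  have PZR: "PZ p R" unfolding R_def
    by (intro PZ_mult[OF p] PZP PZ_pCons[OF p] PZ_const[OF p] Zp_1[OF p] Zp_0[OF p])
  hence rZ: "r m \<in> Zp p" for m unfolding r_def PZ_def by blast
  have PZQ: "PZ p Q" unfolding Q_def
    by (intro PZ_pcompose[OF p] PZP PZ_pCons[OF p] PZ_const[OF p] Zp_1[OF p] Zp_uminus[OF p])
  have degP: "degree P \<le> p - 1"
  proof -
    have "degree P \<le> sum (degree \<circ> (\<lambda>i. [:1, 1 / (of_nat i :: rat):])) {1..<p}"
      unfolding P_def by (rule degree_prod_sum_le) simp
    also have "\<dots> \<le> sum (\<lambda>i. 1) {1..<p}" by (intro sum_mono) simp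
    finally show ?thesis by simp
  qed
  have degR: "degree R \<le> p"
  proof -
    have "degree R \<le> degree [:0,1::rat:] + degree P" unfolding R_def by (rule degree_mult_le)
    thus ?thesis using degP p1 by simp
  qed
  have D_eq: "R - pcompose R [:-1,1:] = smult (of_nat p) Q"
  proof -
    have "pcompose R [:-1,1:] = [:-1,1:] * Q" unfolding R_def Q_def by (simp add: pcompose_mult pcompose_pCons)
    moreover have "R = [:of_nat p - 1, 1:] * Q" unfolding R_def Q_def P_def using shift_id[OF p1] by simp
    ultimately have "R - pcompose R [:-1,1:] = ([:of_nat p - 1, 1:] - [:-1,1:]) * Q"
      by (simp only: left_diff_distrib)
    also have "[:of_nat p - 1, 1:] - [:-1,1:] = [:of_nat p :: rat:]" by simp
    finally show ?thesis by simp
  qed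
  define t where "t j m = r m * (of_nat (m choose j) * (-1 :: rat) ^ (m - j))" for j m
  have coeffD: "coeff (R - pcompose R [:-1,1:]) j = r j - (\<Sum>m\<le>p. t j m)" for j
    unfolding pcompose_expand[OF degR] by (simp add: coeff_sum coeff_shift_power r_def t_def)
  have Dpdiv: "p_divisible p (r j - (\<Sum>m\<le>p. t j m))" for j
  proof -
    have "coeff Q j \<in> Zp p" using PZQ unfolding PZ_def by blast
    hence "p_divisible p (coeff (smult (of_nat p) Q) j)" using pdiv_p_mult[OF p] by simp
    thus ?thesis unfolding coeffD[symmetric] D_eq .
  qed
  have main: "p_divisible p (r k)" if "2 \<le> k" "k < p" for k
    using that
  proof (induction "p - k" arbitrary: k rule: less_induct)
    case less
    define j where "j = k - 1"
    have jk: "k = Suc j" "j \<noteq> k" using less.prems j_def by auto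
    have jp: "j < p" "1 \<le> j" using less.prems j_def by auto
    define A2 where "A2 = {..p} - {j} - {k}"
    have split: "(\<Sum>m\<le>p. t j m) = t j j + (t j k + sum (t j) A2)"
    proof -
      have "(\<Sum>m\<le>p. t j m) = t j j + sum (t j) ({..p} - {j})"
        using jp by (intro sum.remove) auto
      also have "sum (t j) ({..p} - {j}) = t j k + sum (t j) A2"
        unfolding A2_def using less.prems jk by (intro sum.remove) auto
      finally show ?thesis .
    qed
    have tjj: "t j j = r j" by (simp add: t_def)
    have A2pd: "p_divisible p (sum (t j) A2)"
    proof (rule pdiv_sum[OF p])
      fix m assume m: "m \<in> A2"
      hence mp: "m \<le> p" "m \<noteq> j" "m \<noteq> k" unfolding A2_def by auto
      show "p_divisible p (t j m)"
      proof (cases "m < j")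
        case True thus ?thesis by (simp add: t_def pdiv_0[OF p] binomial_eq_0)
      next
        case False
        hence mk: "k < m" using mp jk by auto
        show ?thesis
        proof (cases "m = p")
          case True
          have "p dvd (p choose j)" using jp p by (intro dvd_choose_prime) auto
          then obtain c where c: "p choose j = p * c" by blast
          have "t j m = of_nat p * (r p * (of_nat c * (-1) ^ (p - j)))"
            unfolding t_def True c by simp
          moreover have "r p * (of_nat c * (-1) ^ (p - j)) \<in> Zp p"
            by (intro Zp_mult[OF p] rZ Zp_of_nat[OF p]) (simp add: Zp_m1pow[OF p])
          ultimately show ?thesis using pdiv_p_mult[OF p] by simp
        next
          case False
          hence "m < p" using mp by simp
          hence "p_divisible p (r m)" using less.hyps[of m] mk less.prems by auto
          hence "p_divisible p ((of_nat (m choose j) * (-1) ^ (m - j)) * r m)"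
            by (intro pdiv_mult[OF p] Zp_mult[OF p] Zp_of_nat[OF p])
               (simp_all add: Zp_m1pow[OF p])
          thus ?thesis by (simp add: t_def mult.commute)
        qed
      qed
    qed
    have "p_divisible p (- (t j k) - sum (t j) A2)"
    proof -
      have "- (t j k) - sum (t j) A2 = r j - (\<Sum>m\<le>p. t j m)" unfolding split tjj by simp
      thus ?thesis using Dpdiv[of j] by simp
    qed
    hence "p_divisible p (- (t j k))" using pdiv_add[OF p _ A2pd] by force
    moreover have "t j k = - (of_nat k * r k)" unfolding t_def jk by (simp add: algebra_simps)
    ultimately have "p_divisible p (of_nat k * r k)" by simp
    thus ?case using less.prems by (rule_tac pdiv_cancel[OF p, of k "r k"]) simp_all
  qed
  have "r (Suc k) = ee p k 1" unfolding r_def R_def ee_def P_def by simp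
  thus ?thesis using main[of "Suc k"] k by simp
qed

definition GG :: "nat \<Rightarrow> nat \<Rightarrow> rat poly" where
  "GG n p = pcompose (F n p) [:1, -1:] - (-1) ^ (n - 1) * F n p"

lemma PZ_F: "prime p \<Longrightarrow> n > 0 \<Longrightarrow> PZ p (F n p)"
proof -
  assume p: "prime p" and n: "n > 0"
  have "coeff (F n p) k \<in> Zp p" for k
  proof (cases "0 < k \<and> k < p")
    case True
    have "ee p (n-1) (Suc k) * (1 / of_nat k) \<in> Zp p"
      using True by (intro Zp_mult[OF p] ee_Zp[OF p] inv_Zp[OF p]) auto
    thus ?thesis using True n by (simp add: coeff_F)
  next
    case False thus ?thesis by (subst coeff_F[OF n], subst if_not_P[OF False]) (rule Zp_0[OF p])
  qed
  thus ?thesis unfolding PZ_def by blast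
qed

lemma neg1_pow_poly: "(-1 :: rat poly) ^ j * P = smult ((-1) ^ j) P"
  by (induction j) simp_all

lemma PZ_lin: "prime p \<Longrightarrow> PZ p [:1, -1:]"
  by (intro PZ_pCons PZ_const Zp_1 Zp_uminus)

lemma PZ_GG: "prime p \<Longrightarrow> n > 0 \<Longrightarrow> PZ p (GG n p)"
  unfolding GG_def neg1_pow_poly
  by (intro PZ_diff PZ_pcompose PZ_F PZ_lin PZ_smult Zp_m1pow)

lemma cancel_L:
  assumes p: "prime p" and d: "PD p ([:0,1,-1:] * Q)"
  shows "PD p Q"
proof -
  have "p_divisible p (coeff Q k)" for k
  proof (induction k)
    case 0 thus ?case using d coeff_L1[of Q] unfolding PD_def by metis
  next
    case (Suc k)
    have "p_divisible p (coeff ([:0,1,-1:] * Q) (Suc (Suc k)))" using d unfolding PD_def by blast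
    hence "p_divisible p (coeff Q (Suc k) - coeff Q k)" by (simp only: coeff_L2)
    hence "p_divisible p ((coeff Q (Suc k) - coeff Q k) + coeff Q k)" using Suc pdiv_add[OF p] by blast
    thus ?case by simp
  qed
  thus ?thesis unfolding PD_def by blast
qed

lemma deriv_to_coeff:
  assumes p: "prime p" and d: "PD p (pderiv G)" and z: "\<forall>k\<ge>p. coeff G k = 0" and k: "0 < k"
  shows "p_divisible p (coeff G k)"
proof (cases "k < p")
  case True
  have "p_divisible p (coeff (pderiv G) (k - 1))" using d unfolding PD_def by blast
  hence "p_divisible p (of_nat k * coeff G k)" using k by (simp add: coeff_pderiv)
  thus ?thesis using True k by (rule_tac pdiv_cancel[OF p, of k]) simp_all
next
  case False thus ?thesis using z pdiv_0[OF p] by simp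
qed

lemma GG_high:
  assumes p: "prime p" and n: "n > 0" shows "\<forall>k\<ge>p. coeff (GG n p) k = 0"
proof -
  have p1: "1 \<le> p" using p prime_ge_1_nat by blast
  have "\<forall>i>p - 1. coeff (F n p) i = 0" using n by (auto simp: coeff_F)
  hence dF: "degree (F n p) \<le> p - 1" by (rule degree_le)
  have "degree (pcompose (F n p) [:1, -1:]) \<le> p - 1"
    using degree_pcompose_le[of "F n p" "[:1,-1:]"] dF by simp
  hence c1: "coeff (pcompose (F n p) [:1, -1:]) k = 0" if "k \<ge> p" for k
    using that p1 by (intro coeff_eq_0) linarith
  have c2: "coeff (F n p) k = 0" if "k \<ge> p" for k using that n by (simp add: coeff_F)
  show ?thesis unfolding GG_def neg1_pow_poly using c1 c2 by simp
qed

lemma Lsub: "pcompose [:0,1,-1:] [:1,-1:] = [:0,1,-1 :: rat:]"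
  by (simp add: pcompose_pCons)

lemma L_deriv:
  "[:0,1,-1:] * pderiv (GG n p) =
     - pcompose ([:0,1,-1:] * pderiv (F n p)) [:1,-1:] - smult ((-1) ^ (n - 1)) ([:0,1,-1:] * pderiv (F n p))"
proof -
  have d1: "pderiv (GG n p) = - pcompose (pderiv (F n p)) [:1,-1:] - smult ((-1)^(n-1)) (pderiv (F n p))"
    unfolding GG_def neg1_pow_poly by (simp add: pderiv_diff pderiv_pcompose pderiv_smult pderiv_pCons)
  show ?thesis unfolding d1 pcompose_mult Lsub by (simp add: algebra_simps)
qed

lemma L_step:
  assumes p: "1 < p"
  shows "[:0,1,-1:] * pderiv (GG (Suc (Suc m)) p) =
     GG (Suc m) p - smult (ee p (Suc m) 1) (pcompose [:0,1:] [:1,-1:] + smult ((-1)^(Suc m)) [:0,1:])"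
proof -
  have c: "[:0, ee p (Suc m) 1:] = smult (ee p (Suc m) 1) [:0,1:]" by simp
  have "[:0,1,-1:] * pderiv (GG (Suc (Suc m)) p) =
     - pcompose ([:0, ee p (Suc m) 1:] - F (Suc m) p) [:1,-1:] - smult ((-1)^(Suc m)) ([:0, ee p (Suc m) 1:] - F (Suc m) p)"
    using L_deriv[of "Suc (Suc m)" p, unfolded rel_A[OF p, of m] diff_Suc_1] .
  also have "\<dots> = GG (Suc m) p - smult (ee p (Suc m) 1) (pcompose [:0,1:] [:1,-1:] + smult ((-1)^(Suc m)) [:0,1:])"
    unfolding GG_def neg1_pow_poly by (simp add: pcompose_diff pcompose_pCons smult_diff_right algebra_simps)
  finally show ?thesis .
qed

lemma L_base:
  assumes p: "1 < p"
  shows "[:0,1,-1:] * pderiv (GG (Suc 0) p) =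
     [:1,-1:] ^ p - [:1,-1:] - monom 1 1 + monom 1 p"
  unfolding L_deriv rel_A1[OF p] by (simp add: pcompose_diff pcompose_monom')

lemma base_PD:
  assumes p: "prime p" and p2: "p > 2"
  shows "PD p ([:1,-1:] ^ p - [:1,-1:] - monom 1 1 + monom 1 p)"
proof -
  have odd: "odd p" using p p2 prime_odd_nat by blast
  have cp: "coeff ([:1,-1:] ^ p) j = of_nat (p choose j) * (-1 :: rat) ^ j" for j
  proof (cases "j \<le> p")
    case True thus ?thesis by (simp add: coeff_linear_poly_power)
  next
    case False
    have "degree ([:1,-1::rat:] ^ p) \<le> p" using degree_power_le[of "[:1,-1::rat:]" p] by simp
    hence "coeff ([:1,-1:] ^ p) j = (0::rat)" using False by (intro coeff_eq_0) simp
    thus ?thesis using False by simp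
  qed
  have "p_divisible p (coeff ([:1,-1:] ^ p - [:1,-1:] - monom 1 1 + monom 1 p) j)" for j
  proof -
    have e: "coeff ([:1,-1:] ^ p - [:1,-1:] - monom 1 1 + monom 1 p) j =
       of_nat (p choose j) * (-1 :: rat) ^ j - (if j = 0 then 1 else 0) + (if j = p then 1 else 0)"
      by (simp add: cp coeff_monom coeff_pCons split: nat.splits)
    show ?thesis
    proof (cases "j = 0")
      case True thus ?thesis using e p2 pdiv_0[OF p] by simp
    next
      case False
      show ?thesis
      proof (cases "j = p")
        case True
        have "coeff [:1,-1::rat:] p = 0" using p2 by (intro coeff_eq_0) simp
        thus ?thesis unfolding e True using odd p2 by (simp add: pdiv_0[OF p])
      next
        case False
        show ?thesis
        proof (cases "j < p")
          case True
          have "p dvd (p choose j)" using True \<open>j \<noteq> 0\<close> p by (intro dvd_choose_prime) auto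
          then obtain c where c: "p choose j = p * c" by blast
          have "p_divisible p (of_nat p * (of_nat c * (-1) ^ j))"
            by (intro pdiv_p_mult[OF p] Zp_mult[OF p] Zp_of_nat[OF p] Zp_m1pow[OF p])
          thus ?thesis using e \<open>j \<noteq> 0\<close> False c by (simp add: mult.assoc)
        next
          case False
          thus ?thesis using e \<open>j \<noteq> p\<close> pdiv_0[OF p] by (simp add: binomial_eq_0)
        qed
      qed
    qed
  qed
  thus ?thesis unfolding PD_def by blast
qed

lemma finish:
  assumes p: "prime p" and n: "1 \<le> n" "n + 2 \<le> p" and d: "PD p ([:0,1,-1:] * pderiv (GG n p))"
  shows "PD p (GG n p)"
proof -
  have dd: "PD p (pderiv (GG n p))" by (rule cancel_L[OF p d])
  have "p_divisible p (coeff (GG n p) k)" for k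
  proof (cases "k = 0")
    case True
    have "coeff (GG n p) 0 = poly (GG n p) 0" by (simp add: poly_0_coeff_0)
    also have "\<dots> = ee p n 1" using n by (simp add: GG_def poly_pcompose poly_F_1 poly_F_0)
    finally show ?thesis using True ee_pdiv[OF p n] by simp
  next
    case False
    thus ?thesis using deriv_to_coeff[OF p dd GG_high[OF p]] n by simp
  qed
  thus ?thesis unfolding PD_def by blast
qed

lemma main:
  assumes p: "prime p"
  shows "1 \<le> n \<Longrightarrow> n + 2 \<le> p \<Longrightarrow> PD p (GG n p)"
proof (induction n)
  case 0 thus ?case by simp
next
  case (Suc n)
  have p1: "1 < p" using Suc.prems by simp
  show ?case
  proof (cases n)
    case 0
    have "PD p ([:0,1,-1:] * pderiv (GG (Suc 0) p))"
      unfolding L_base[OF p1] using Suc.prems 0 by (intro base_PD[OF p]) simp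
    thus ?thesis using finish[OF p Suc.prems] 0 by simp
  next
    case (Suc m)
    have IH: "PD p (GG (Suc m) p)" using Suc \<open>Suc n + 2 \<le> p\<close> by (intro \<open>1 \<le> n \<Longrightarrow> n + 2 \<le> p \<Longrightarrow> PD p (GG n p)\<close>[unfolded Suc]) simp_all
    have c: "p_divisible p (ee p (Suc m) 1)" using Suc \<open>Suc n + 2 \<le> p\<close> by (intro ee_pdiv[OF p]) simp_all
    have "PD p (GG (Suc m) p - smult (ee p (Suc m) 1) (pcompose [:0,1:] [:1,-1:] + smult ((-1)^(Suc m)) [:0,1:]))"
      by (intro PD_diff[OF p] IH PD_smult[OF p] c PZ_add[OF p] PZ_pcompose[OF p] PZ_lin[OF p] PZ_smult[OF p]
          Zp_m1pow[OF p] PZ_pCons[OF p] PZ_const[OF p] Zp_0[OF p] Zp_1[OF p])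
    hence "PD p ([:0,1,-1:] * pderiv (GG (Suc (Suc m)) p))" unfolding L_step[OF p1] .
    thus ?thesis using finish[OF p Suc.prems] Suc by simp
  qed
qed

theorem theorem1p2:
  fixes n p :: nat
  assumes "n > 0" and "prime p" and "p > n + 1"
  shows "\<forall>k. p_divisible p
           (coeff (pcompose (F n p) [:1, -1:] - (-1) ^ (n - 1) * F n p) k)"
  using main[OF assms(2), of n] assms unfolding PD_def GG_def by simp

end
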